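(* Let $N,K$ be positive integers, $\mathcal{N}=\{1,\dots,N\}$, and let $\underline{\mathsf{d}}$ be uniformly distributed over $\mathcal{N}^K$. Then for every integer $s$ with $1\le s\le\lceil\min\{N,K\}/4\rceil$, \[ \Pr\bigl(w(\underline{\mathsf{d}})\ge s\bigr)\ge 2/3, \] where $w(\underline{\mathsf{d}})$ is the number of distinct entries of $\underline{\mathsf{d}}$. *)

theory Defs
  imports "HOL-Probability.Probability"
begin

text \<open>Sample space N^K: vectors d = (d_0,...,d_{K-1}) with entries in {1..N},
  represented as extensional functions on {..<K}.\<close>
definition demand_space :: "nat \<Rightarrow> nat \<Rightarrow> (nat \<Rightarrow> nat) set" where
  "demand_space N K = {..<K} \<rightarrow>\<^sub>E {1..N}"

definition w :: "nat \<Rightarrow> (nat \<Rightarrow> nat) \<Rightarrow> nat" where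
  "w K d = card (d ` {..<K})"

end

theory Submission
  imports Defs
begin

lemma pow_fact_le_exp: "(x::real) \<ge> 0 \<Longrightarrow> x ^ n / fact n \<le> exp x"
proof -
  assume x: "x \<ge> 0"
  have "(\<Sum>i\<in>{n}. x ^ i / fact i) \<le> (\<Sum>i. x ^ i / fact i)"
    using summable_exp_generic[of x] x
    by (intro sum_le_suminf) (auto simp: divide_inverse ac_simps)
  thus ?thesis by (simp add: exp_def divide_inverse ac_simps)
qed

lemma fact_choose: "fact r * (N choose r) \<le> (N::nat) ^ r"
proof (cases "r \<le> N")
  case True
  have e: "fact (N - r) * (fact r * (N choose r)) = (fact N :: nat)"
    using binomial_fact_lemma[OF True] by (simp add: ac_simps)
  have "fact r * (N choose r) = fact N div (fact (N - r) :: nat)"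
    by (subst e[symmetric]) simp
  with fact_div_fact_le_pow[OF True] show ?thesis by simp
next
  case False thus ?thesis by (simp add: binomial_eq_0)
qed

lemma key:
  fixes N K r :: nat
  assumes "4*r+1 \<le> N" "4*r+1 \<le> K"
  shows "3 * real (N choose r) * real r ^ K \<le> real N ^ K"
proof (cases "r = 0")
  case True thus ?thesis using assms by (simp add: power_0_left)
next
  case False
  have Npos: "real N > 0" using assms by simp
  have fc: "fact r * real (N choose r) \<le> real N ^ r"
    using fact_choose[of r N] by (metis of_nat_fact of_nat_le_iff of_nat_mult of_nat_power)
  have C: "real (N choose r) \<le> real N ^ r / fact r"
    using fc by (simp add: field_simps)
  have ex: "real r ^ r / fact r \<le> exp (real r)" by (rule pow_fact_le_exp) simp
  have rK: "real r ^ K = real r ^ r * real r ^ (K - r)"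
    using assms by (simp add: power_add[symmetric])
  have NK: "real N ^ K = real N ^ r * real N ^ (K - r)"
    using assms by (simp add: power_add[symmetric])
  have step1: "4 ^ (K - r) * real r ^ (K - r) \<le> real N ^ (K - r)"
  proof -
    have "(4 * real r) ^ (K - r) \<le> real N ^ (K - r)"
      using assms by (intro power_mono) auto
    thus ?thesis by (simp add: power_mult_distrib)
  qed
  have e64: "exp (real r) \<le> 64 ^ r"
  proof -
    have "exp (real r) = exp 1 ^ r" by (simp add: exp_of_nat_mult[symmetric])
    also have "\<dots> \<le> 64 ^ r" using exp_le by (intro power_mono) auto
    finally show ?thesis .
  qed
  have "(4::real) ^ (3*r+1) \<le> 4 ^ (K - r)"
    using assms by (intro power_increasing) auto
  moreover have "(4::real) ^ (3*r+1) = 4 * 64 ^ r"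
    by (simp add: power_add power_mult)
  ultimately have step2: "3 * exp (real r) \<le> 4 ^ (K - r)" using e64 zero_le_power[of "64::real" r] by linarith
  have "3 * real (N choose r) * real r ^ K
      \<le> 3 * (real N ^ r / fact r) * (real r ^ r * real r ^ (K - r))"
    unfolding rK[symmetric] using C by (intro mult_right_mono mult_left_mono) auto
  also have "\<dots> = real N ^ r * (3 * (real r ^ r / fact r)) * real r ^ (K - r)"
    by (simp add: field_simps)
  also have "\<dots> \<le> real N ^ r * (3 * exp (real r)) * real r ^ (K - r)"
    using ex by (intro mult_right_mono mult_left_mono) auto
  also have "\<dots> \<le> real N ^ r * 4 ^ (K - r) * real r ^ (K - r)"
    using step2 by (intro mult_right_mono mult_left_mono) auto
  also have "\<dots> \<le> real N ^ r * real N ^ (K - r)"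
    using step1 by (simp add: mult.assoc mult_left_mono)
  finally show ?thesis using NK by simp
qed

lemma extend_subset:
  assumes "finite B" "A \<subseteq> B" "card A \<le> n" "n \<le> card B"
  shows "\<exists>T. A \<subseteq> T \<and> T \<subseteq> B \<and> card T = n"
proof -
  have fA: "finite A" using assms finite_subset by blast
  have "card (B - A) = card B - card A" using assms fA by (simp add: card_Diff_subset)
  then obtain C where C: "C \<subseteq> B - A" "card C = n - card A"
    using obtain_subset_with_card_n[of "n - card A" "B - A"] assms by (metis diff_le_mono)
  have fC: "finite C" using C assms finite_subset by blast
  have "card (A \<union> C) = card A + card C"
    using C fA fC by (intro card_Un_disjoint) auto
  thus ?thesis using C assms by (intro exI[of _ "A \<union> C"]) auto
qed

theorem lemma2:
  fixes N K s :: nat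
  assumes "N \<ge> 1" and "K \<ge> 1"
    and "1 \<le> s" and "real s \<le> real_of_int \<lceil>real (min N K) / 4\<rceil>"
  shows "measure_pmf.prob (pmf_of_set (demand_space N K)) {d. w K d \<ge> s} \<ge> 2 / 3"
proof -
  define r where "r = s - 1"
  define D where "D = demand_space N K"
  have "real s < real (min N K) / 4 + 1"
    using assms(4) ceiling_less_iff[of "real (min N K) / 4"] by linarith
  hence r4: "4*r+1 \<le> N" "4*r+1 \<le> K" using assms(3) unfolding r_def by auto
  have finD: "finite D" unfolding D_def demand_space_def by (auto intro: finite_PiE)
  have cardD: "card D = N ^ K"
    unfolding D_def demand_space_def by (simp add: card_PiE)
  have Dne: "D \<noteq> {}" using cardD assms by auto
  define E where "E = {d \<in> D. w K d < s}"
  define F where "F = {S. S \<subseteq> {1..N} \<and> card S = r}"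
  have sub: "E \<subseteq> (\<Union>S\<in>F. {..<K} \<rightarrow>\<^sub>E S)"
  proof
    fix d assume "d \<in> E"
    hence dD: "d \<in> D" and wl: "card (d ` {..<K}) \<le> r"
      unfolding E_def w_def r_def using assms(3) by auto
    have im: "d ` {..<K} \<subseteq> {1..N}" using dD unfolding D_def demand_space_def by auto
    obtain T where T: "d ` {..<K} \<subseteq> T" "T \<subseteq> {1..N}" "card T = r"
      using extend_subset[OF _ im wl, of] r4 by auto
    have "d \<in> {..<K} \<rightarrow>\<^sub>E T" using dD T(1) unfolding D_def demand_space_def by auto
    thus "d \<in> (\<Union>S\<in>F. {..<K} \<rightarrow>\<^sub>E S)" using T unfolding F_def by auto
  qed
  have finF: "finite F" unfolding F_def by auto
  have "card E \<le> card (\<Union>S\<in>F. {..<K} \<rightarrow>\<^sub>E S)"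
    by (rule card_mono) (use finF sub in \<open>auto intro!: finite_PiE simp: F_def intro: finite_subset\<close>)
  also have "\<dots> \<le> (\<Sum>S\<in>F. card ({..<K} \<rightarrow>\<^sub>E S))" by (rule card_UN_le[OF finF])
  also have "\<dots> = (\<Sum>S\<in>F. r ^ K)"
    by (intro sum.cong) (auto simp: F_def card_PiE)
  also have "\<dots> = (N choose r) * r ^ K"
    using n_subsets[of "{1..N}" r] by (simp add: F_def)
  finally have cE: "card E \<le> (N choose r) * r ^ K" .
  have "3 * real (card E) \<le> 3 * real ((N choose r) * r ^ K)"
    using cE by linarith
  also have "\<dots> \<le> real N ^ K" using key[OF r4] by simp
  finally have cE3: "3 * real (card E) \<le> real (card D)" using cardD by simp
  have eq: "D \<inter> {d. w K d \<ge> s} = D - E" unfolding E_def by auto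
  have finE: "finite E" using finD unfolding E_def by auto
  have EsubD: "E \<subseteq> D" unfolding E_def by auto
  have "measure_pmf.prob (pmf_of_set D) {d. w K d \<ge> s} = real (card (D - E)) / real (card D)"
    using measure_pmf_of_set[OF Dne finD] eq by simp
  also have "\<dots> = (real (card D) - real (card E)) / real (card D)"
    using EsubD finE by (simp add: card_Diff_subset of_nat_diff card_mono finD)
  finally have P: "measure_pmf.prob (pmf_of_set D) {d. w K d \<ge> s}
      = (real (card D) - real (card E)) / real (card D)" .
  have cpos: "real (card D) > 0" using cardD assms by simp
  have "2 / 3 \<le> (real (card D) - real (card E)) / real (card D)"
    using cE3 cpos by (simp add: field_simps)
  thus ?thesis using P unfolding D_def by simp
qed

end
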